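(* Let $a\ge b\ge1$ be integers with $a>\frac{1+\sqrt5}{2}b$, let $\beta>1$ be the positive root of $\beta^2=a\beta+b$ and $\beta'=a-\beta$. Then \[ \sup_{j\in\mathbb Z}P_{\mathbf h(j-\beta)}(\beta')\;\le\;\frac{b-1}{1-(\beta')^2}\;<\;2\beta-a-1 . \]
   Context: For an algebraic integer $\beta$, the $\beta$-adic expansion of $x\in\mathbb Z[\beta]$ is the unique infinite word $\mathbf h(x)=u_0u_1u_2\cdots$ with $u_n\in\{0,1,\dots,|N(\beta)|-1\}$ such that $x-\sum_{i=0}^{n-1}u_i\beta^i\in\beta^n\mathbb Z[\beta]$ for all $n\in\mathbb N$; here $|N(\beta)|=b$. For an infinite word $\mathbf u=u_0u_1\cdots$ of integers, $P_{\mathbf u}(X)=\sum_{n\ge0}u_nX^n$. Note $j-\beta\in\mathbb Z[\beta]$ for $j\in\mathbb Z$. *)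

theory Defs
  imports Complex_Main
begin

definition Zbeta :: "real \<Rightarrow> real set" where
  "Zbeta \<beta> = {x. \<exists>(c::nat \<Rightarrow> int) (N::nat). x = (\<Sum>i<N. of_int (c i) * \<beta> ^ i)}"

text \<open>beta-adic expansion of x with digit bound nb = |N(beta)|: the unique digit word u
  with u n in {0,...,nb-1} and x - sum_{i<n} u_i beta^i in beta^n Z[beta] for all n.\<close>
definition beta_expansion :: "real \<Rightarrow> int \<Rightarrow> real \<Rightarrow> (nat \<Rightarrow> int)" where
  "beta_expansion \<beta> nb x = (THE u. (\<forall>n. u n \<in> {0..<nb}) \<and>
      (\<forall>n. x - (\<Sum>i<n. of_int (u i) * \<beta> ^ i) \<in> (\<lambda>y. \<beta> ^ n * y) ` Zbeta \<beta>))"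

definition Pword :: "(nat \<Rightarrow> int) \<Rightarrow> real \<Rightarrow> real" where
  "Pword u X = (\<Sum>n. of_int (u n) * X ^ n)"

end

theory Submission
  imports Defs
begin

lemma Zbeta_pow:
  fixes a b :: int and \<beta> :: real
  assumes h: "\<beta>^2 = of_int a * \<beta> + of_int b"
  shows "\<exists>p q::int. \<beta>^i = of_int p + of_int q * \<beta>"
proof (induction i)
  case 0 show ?case by (rule exI[of _ 1], rule exI[of _ 0]) simp
next
  case (Suc i)
  then obtain p q where pq: "\<beta>^i = of_int p + of_int q * \<beta>" by blast
  have "\<beta>^Suc i = of_int p * \<beta> + of_int q * \<beta>^2"
    using pq by (simp add: algebra_simps power2_eq_square)
  also have "\<dots> = of_int (q*b) + of_int (p + q*a) * \<beta>"
    using h by (simp add: algebra_simps)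
  finally show ?case by blast
qed

lemma Zbeta_iff:
  fixes a b :: int and \<beta> :: real
  assumes h: "\<beta>^2 = of_int a * \<beta> + of_int b"
  shows "x \<in> Zbeta \<beta> \<longleftrightarrow> (\<exists>p q::int. x = of_int p + of_int q * \<beta>)"
proof
  assume "x \<in> Zbeta \<beta>"
  then obtain c N where x: "x = (\<Sum>i<N. of_int (c i) * \<beta>^i)" by (auto simp: Zbeta_def)
  have "\<exists>p q::int. (\<Sum>i<N. of_int (c i) * \<beta>^i) = of_int p + of_int q * \<beta>"
  proof (induction N)
    case 0 show ?case by (rule exI[of _ 0], rule exI[of _ 0]) simp
  next
    case (Suc N)
    then obtain p q where pq: "(\<Sum>i<N. of_int (c i) * \<beta>^i) = of_int p + of_int q * \<beta>" by blast
    obtain p' q' where pq': "\<beta>^N = of_int p' + of_int q' * \<beta>" using Zbeta_pow[OF h] by blast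
    have "(\<Sum>i<Suc N. of_int (c i) * \<beta>^i) = of_int (p + c N * p') + of_int (q + c N * q') * \<beta>"
      using pq pq' by (simp add: algebra_simps)
    thus ?case by blast
  qed
  with x show "\<exists>p q::int. x = of_int p + of_int q * \<beta>" by simp
next
  assume "\<exists>p q::int. x = of_int p + of_int q * \<beta>"
  then obtain p q :: int where x: "x = of_int p + of_int q * \<beta>" by blast
  show "x \<in> Zbeta \<beta>" unfolding Zbeta_def
    apply (rule CollectI, rule exI[of _ "\<lambda>i. if i = 0 then p else q"], rule exI[of _ 2])
    using x by (simp add: numeral_2_eq_2)
qed

lemma no_rel:
  fixes a b c e :: int and \<beta> :: real
  assumes h: "\<beta>^2 = of_int a * \<beta> + of_int b" and b1: "1 \<le> b" and ba: "b \<le> a"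
    and ga: "\<beta> > of_int a" and ce: "of_int c * \<beta> = of_int e" and c0: "c \<noteq> 0"
  shows False
proof -
  have "\<beta> = of_int e / of_int c" using ce c0 by (simp add: field_simps)
  hence "\<beta> \<in> \<rat>" by simp
  then obtain r s :: int where s: "s > 0" "coprime r s" "\<beta> = of_int r / of_int s" by (rule Rats_cases')
  have "(of_int r / of_int s)^2 = of_int a * (of_int r / of_int s) + (of_int b::real)" using h s by simp
  hence "(of_int r::real)^2 = of_int a * of_int r * of_int s + of_int b * (of_int s)^2"
    using s(1) by (simp add: field_simps power2_eq_square)
  hence "of_int (r^2) = (of_int (a*r*s + b*s^2) :: real)" by simp
  hence eq: "r^2 = a*r*s + b*s^2" by (simp only: of_int_eq_iff)
  have "s dvd r^2" unfolding eq by (simp add: power2_eq_square)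
  moreover have "coprime (r^2) s" using s(2) by simp
  ultimately have "\<bar>s\<bar> = 1" using coprime_common_divisor_int[of "r^2" s s] by simp
  hence s1: "s = 1" using s(1) by simp
  hence rr: "r^2 = a*r + b" using eq by simp
  have "of_int r > (of_int a :: real)" using ga s s1 by simp
  hence ra: "r \<ge> a + 1" by simp
  have "r * (r - a) \<ge> r * 1" using ra ba b1 by (intro mult_left_mono) auto
  moreover have "r * (r - a) = b" using rr by (simp add: power2_eq_square algebra_simps)
  ultimately show False using ra ba by simp
qed


lemma uniq:
  fixes a b :: int and \<beta> x :: real
  assumes h: "\<beta>^2 = of_int a * \<beta> + of_int b" and b1: "1 \<le> b" and ba: "b \<le> a"
    and ga: "\<beta> > of_int a"
    and u: "(\<forall>n. u n \<in> {0..<b}) \<and>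
      (\<forall>n. x - (\<Sum>i<n. of_int (u i) * \<beta> ^ i) \<in> (\<lambda>y. \<beta> ^ n * y) ` Zbeta \<beta>)"
    and v: "(\<forall>n. v n \<in> {0..<b}) \<and>
      (\<forall>n. x - (\<Sum>i<n. of_int (v i) * \<beta> ^ i) \<in> (\<lambda>y. \<beta> ^ n * y) ` Zbeta \<beta>)"
  shows "u = v"
proof -
  have "u n = v n" for n
  proof (induction n rule: less_induct)
    case (less n)
    have S: "(\<Sum>i<n. of_int (u i) * \<beta> ^ i) = (\<Sum>i<n. of_int (v i) * \<beta> ^ i)"
      using less by (intro sum.cong) auto
    obtain y1 where y1: "y1 \<in> Zbeta \<beta>" "x - (\<Sum>i<Suc n. of_int (u i) * \<beta> ^ i) = \<beta>^Suc n * y1"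
      using u by blast
    obtain y2 where y2: "y2 \<in> Zbeta \<beta>" "x - (\<Sum>i<Suc n. of_int (v i) * \<beta> ^ i) = \<beta>^Suc n * y2"
      using v by blast
    obtain p1 q1 :: int where pq1: "y1 = of_int p1 + of_int q1 * \<beta>" using y1(1) Zbeta_iff[OF h] by blast
    obtain p2 q2 :: int where pq2: "y2 = of_int p2 + of_int q2 * \<beta>" using y2(1) Zbeta_iff[OF h] by blast
    define d where "d = v n - u n"
    have "\<beta>^n * of_int d = \<beta>^n * (\<beta> * (y1 - y2))"
      using y1(2) y2(2) S unfolding d_def by (simp add: algebra_simps)
    moreover have "\<beta> \<noteq> 0" using ga ba b1 by auto
    ultimately have "of_int d = \<beta> * (y1 - y2)" by simp
    also have "\<dots> = of_int (p1 - p2) * \<beta> + of_int (q1 - q2) * \<beta>^2"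
      unfolding pq1 pq2 by (simp add: algebra_simps power2_eq_square)
    also have "\<dots> = of_int ((q1-q2)*b) + of_int ((p1 - p2) + (q1-q2)*a) * \<beta>"
      using h by (simp add: algebra_simps)
    finally have eq: "of_int ((p1 - p2) + (q1-q2)*a) * \<beta> = of_int (d - (q1-q2)*b)" by simp
    have c0: "(p1 - p2) + (q1-q2)*a = 0"
      using no_rel[OF h b1 ba ga eq] by blast
    hence "of_int d = (of_int ((q1-q2)*b) :: real)" using eq by simp
    hence dq: "d = (q1-q2)*b" by (simp only: of_int_eq_iff)
    have "0 \<le> u n" "u n < b" "0 \<le> v n" "v n < b" using u v by auto
    hence bd: "d < b" "d > - b" unfolding d_def by linarith+
    have "q1 - q2 = 0"
    proof (rule ccontr)
      assume "q1 - q2 \<noteq> 0"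
      hence "q1 - q2 \<ge> 1 \<or> q1 - q2 \<le> -1" by linarith
      thus False
      proof
        assume "q1 - q2 \<ge> 1" hence "(q1-q2)*b \<ge> 1*b" using b1 by (intro mult_right_mono) auto
        thus False using bd dq by linarith
      next
        assume "q1 - q2 \<le> -1" hence "(q1-q2)*b \<le> (-1)*b" using b1 by (intro mult_right_mono) auto
        thus False using bd dq by linarith
      qed
    qed
    thus ?case using dq unfolding d_def by simp
  qed
  thus ?thesis by auto
qed

fun st :: "int \<Rightarrow> int \<Rightarrow> int \<Rightarrow> nat \<Rightarrow> int \<times> int" where
  "st a b j 0 = (j, -1)"
| "st a b j (Suc n) = (snd (st a b j n) - (fst (st a b j n) div b) * a, fst (st a b j n) div b)"

lemma exist:
  fixes a b j :: int and \<beta> :: real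
  assumes h: "\<beta>^2 = of_int a * \<beta> + of_int b" and b1: "1 \<le> b"
  defines "u \<equiv> \<lambda>n. fst (st a b j n) mod b"
  shows "(\<forall>n. u n \<in> {0..<b}) \<and>
      (\<forall>n. of_int j - \<beta> - (\<Sum>i<n. of_int (u i) * \<beta> ^ i) \<in> (\<lambda>y. \<beta> ^ n * y) ` Zbeta \<beta>)"
proof -
  have inv: "of_int j - \<beta> - (\<Sum>i<n. of_int (u i) * \<beta> ^ i)
     = \<beta>^n * (of_int (fst (st a b j n)) + of_int (snd (st a b j n)) * \<beta>)" for n
  proof (induction n)
    case 0 then show ?case by simp
  next
    case (Suc n)
    define m where "m = fst (st a b j n)"
    define k where "k = snd (st a b j n)"
    define t where "t = m div b"
    have mt: "m = b * t + u n" unfolding t_def u_def m_def by simp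
    have "of_int j - \<beta> - (\<Sum>i<Suc n. of_int (u i) * \<beta> ^ i)
       = \<beta>^n * (of_int m + of_int k * \<beta>) - of_int (u n) * \<beta>^n"
      using Suc unfolding m_def k_def by simp
    also have "\<dots> = \<beta>^n * (of_int b * of_int t + of_int k * \<beta>)"
      unfolding mt by (simp add: algebra_simps)
    also have "\<dots> = \<beta>^n * (\<beta> * (of_int (k - t*a) + of_int t * \<beta>))"
    proof -
      have "\<beta> * (of_int (k - t*a) + of_int t * \<beta>) = of_int k * \<beta> - of_int t * of_int a * \<beta> + of_int t * \<beta>^2"
        by (simp add: algebra_simps power2_eq_square)
      also have "\<dots> = of_int b * of_int t + of_int k * \<beta>" using h by (simp add: algebra_simps)
      finally show ?thesis by simp
    qed
    also have "\<dots> = \<beta>^Suc n * (of_int (fst (st a b j (Suc n))) + of_int (snd (st a b j (Suc n))) * \<beta>)"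
      unfolding t_def m_def k_def by (simp add: algebra_simps)
    finally show ?case .
  qed
  show ?thesis
  proof (intro conjI allI)
    fix n show "u n \<in> {0..<b}" unfolding u_def using b1 by simp
  next
    fix n
    have "of_int (fst (st a b j n)) + of_int (snd (st a b j n)) * \<beta> \<in> Zbeta \<beta>"
      using Zbeta_iff[OF h] by blast
    thus "of_int j - \<beta> - (\<Sum>i<n. of_int (u i) * \<beta> ^ i) \<in> (\<lambda>y. \<beta> ^ n * y) ` Zbeta \<beta>"
      unfolding inv by blast
  qed
qed

lemma Pword_bound:
  fixes u :: "nat \<Rightarrow> int" and X :: real
  assumes u: "\<forall>n. u n \<in> {0..<b}" and X: "-1 < X" "X < 0"
  shows "Pword u X \<le> (of_int b - 1) / (1 - X^2)"
proof -
  define f where "f = (\<lambda>n. (of_int b - 1) / 2 * (X^n + (-X)^n))"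
  have s1: "(\<lambda>n. X^n) sums (1/(1-X))" using X by (intro geometric_sums) auto
  have s2: "(\<lambda>n. (-X)^n) sums (1/(1-(-X)))" using X by (intro geometric_sums) auto
  have fs0: "f sums ((of_int b - 1) / 2 * (1/(1-X) + 1/(1-(-X))))"
    unfolding f_def by (intro sums_mult sums_add s1 s2)
  have eqv: "(of_int b - 1) / 2 * (1/(1-X) + 1/(1-(-X))) = (of_int b - 1) / (1 - X^2)"
  proof -
    have "X^2 < 1" using X by (simp add: abs_square_less_1)
    hence "1 - X^2 \<noteq> 0" "1 - X \<noteq> 0" "1 + X \<noteq> 0" using X by auto
    thus ?thesis by (simp add: field_simps power2_eq_square)
  qed
  have fs: "f sums ((of_int b - 1) / (1 - X^2))" using fs0 unfolding eqv .
  have gs: "summable (\<lambda>n. (of_int b - 1) * \<bar>X\<bar>^n)"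
    using X by (intro summable_mult summable_geometric) auto
  have "summable (\<lambda>n. of_int (u n) * X^n)"
  proof (rule summable_comparison_test[OF _ gs], intro exI allI impI)
    fix n
    have "0 \<le> u n" "u n \<le> b - 1" using u by auto
    hence "0 \<le> (of_int (u n)::real)" "of_int (u n) \<le> (of_int b - 1 :: real)" by linarith+
    thus "norm (of_int (u n) * X^n) \<le> (of_int b - 1) * \<bar>X\<bar>^n"
      by (simp add: abs_mult power_abs mult_right_mono)
  qed
  moreover have "of_int (u n) * X^n \<le> f n" for n
  proof (cases "even n")
    case True
    hence "X^n \<ge> 0" by (simp add: zero_le_even_power)
    moreover have "(-X)^n = X^n" using True by simp
    moreover have "of_int (u n) \<le> (of_int b - 1 :: real)"
    proof -
      have "u n \<le> b - 1" using u by auto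
      thus ?thesis by linarith
    qed
    ultimately show ?thesis unfolding f_def by (simp add: mult_right_mono)
  next
    case False
    hence "X^n < 0" using X by (simp add: power_less_zero_eq)
    moreover have "(-X)^n = -(X^n)" using False by simp
    moreover have "0 \<le> (of_int (u n) :: real)" using u by auto
    ultimately have "of_int (u n) * X^n \<le> 0" "f n = 0" unfolding f_def
      by (simp_all only: mult_nonneg_nonpos less_imp_le) simp
    thus ?thesis by simp
  qed
  ultimately have "Pword u X \<le> suminf f"
    unfolding Pword_def using fs by (intro suminf_le) (auto simp: sums_iff)
  thus ?thesis using fs by (simp add: sums_iff)
qed


theorem mainTheorem4:
  fixes a b :: int and \<beta> :: real
  assumes "1 \<le> b" and "b \<le> a"
    and "real_of_int a > (1 + sqrt 5) / 2 * real_of_int b"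
    and "\<beta> > 1" and "\<beta> ^ 2 = real_of_int a * \<beta> + real_of_int b"
  shows "(\<forall>j::int. Pword (beta_expansion \<beta> b (real_of_int j - \<beta>)) (real_of_int a - \<beta>)
            \<le> (real_of_int b - 1) / (1 - (real_of_int a - \<beta>) ^ 2))
       \<and> (real_of_int b - 1) / (1 - (real_of_int a - \<beta>) ^ 2) < 2 * \<beta> - real_of_int a - 1"
proof -
  note b1 = assms(1) and ba = assms(2) and phi = assms(3) and g1 = assms(4) and h = assms(5)
  have bpos: "(0::real) < of_int b" using b1 by simp
  have "\<beta> * \<beta> > of_int a * \<beta>" using h bpos by (simp add: power2_eq_square)
  hence ga: "\<beta> > of_int a" using g1 by (simp add: mult_less_cancel_right)
  have bb: "\<beta> * (\<beta> - of_int a) = of_int b" using h by (simp add: power2_eq_square algebra_simps)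
  have Xe: "of_int a - \<beta> = - of_int b / \<beta>" using bb g1 by (simp add: field_simps)
  have bl: "of_int b < \<beta>" using ga ba by linarith
  have X1: "-1 < of_int a - \<beta>" unfolding Xe using bl g1 bpos by (simp add: field_simps)
  have X0: "of_int a - \<beta> < 0" using ga by simp
  have part1: "Pword (beta_expansion \<beta> b (real_of_int j - \<beta>)) (real_of_int a - \<beta>)
            \<le> (real_of_int b - 1) / (1 - (real_of_int a - \<beta>) ^ 2)" for j
  proof -
    let ?P = "\<lambda>u. (\<forall>n. u n \<in> {0..<b}) \<and>
      (\<forall>n. real_of_int j - \<beta> - (\<Sum>i<n. of_int (u i) * \<beta> ^ i) \<in> (\<lambda>y. \<beta> ^ n * y) ` Zbeta \<beta>)"
    have "\<exists>!u. ?P u"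
    proof (rule ex1I)
      show "?P (\<lambda>n. fst (st a b j n) mod b)" using exist[OF h b1] by blast
    next
      fix v assume pv: "?P v"
      show "v = (\<lambda>n. fst (st a b j n) mod b)"
        by (rule uniq[OF h b1 ba ga pv exist[OF h b1, of j]])
    qed
    hence "?P (beta_expansion \<beta> b (real_of_int j - \<beta>))"
      unfolding beta_expansion_def by (rule theI')
    thus ?thesis using Pword_bound X1 X0 by blast
  qed
  have sq5: "sqrt 5 * sqrt 5 = (5::real)" by simp
  have gphi: "\<beta> > (1 + sqrt 5) / 2 * of_int b" using phi ga by linarith
  have K: "\<beta>^2 - of_int b * \<beta> - (of_int b)^2 > 0"
  proof -
    have gen: "\<And>x y p q::real. (x - p*y)*(x - q*y) = x^2 - (p+q)*y*x + (p*q)*y^2"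
      by (simp add: algebra_simps power2_eq_square)
    have pq1: "(1 + sqrt 5)/2 + (1 - sqrt 5)/2 = (1::real)" by (simp add: field_simps)
    have pq2: "(1 + sqrt 5)/2 * ((1 - sqrt 5)/2) = (-1::real)"
    proof -
      have "(1 + sqrt 5) * (1 - sqrt 5) = (1::real) - sqrt 5 * sqrt 5" by (simp add: algebra_simps)
      thus ?thesis using sq5 by simp
    qed
    have e: "\<beta>^2 - of_int b * \<beta> - (of_int b)^2
       = (\<beta> - (1 + sqrt 5) / 2 * of_int b) * (\<beta> - (1 - sqrt 5) / 2 * of_int b)"
      unfolding gen pq1 pq2 by simp
    have "sqrt 5 \<ge> 0" by simp
    hence "(1 - sqrt 5) / 2 * of_int b \<le> 1/2 * of_int b" using bpos
      by (intro mult_right_mono) auto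
    hence "\<beta> - (1 - sqrt 5) / 2 * of_int b > 0" using bl bpos by linarith
    moreover have "\<beta> - (1 + sqrt 5) / 2 * of_int b > 0" using gphi by simp
    ultimately show ?thesis unfolding e by simp
  qed
  define D where "D = \<beta>^2 - (of_int b)^2"
  have DbB: "D > of_int b * \<beta>" using K unfolding D_def by simp
  have "of_int b * \<beta> > 0" using bpos g1 by simp
  hence Dpos: "D > 0" using DbB by linarith
  have L: "1 - (of_int a - \<beta>)^2 = D / \<beta>^2"
    unfolding Xe D_def using g1 by (simp add: field_simps power2_eq_square)
  have R: "2 * \<beta> - of_int a - 1 = (\<beta>^2 - \<beta> + of_int b) / \<beta>"
    using bb g1 by (simp add: field_simps power2_eq_square)
  have q1: "\<beta>^2 - \<beta> = \<beta>*(\<beta>-1)" by (simp add: power2_eq_square algebra_simps)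
  have q2: "\<beta>*(\<beta>-1) > 0" using g1 by simp
  have Qpos: "\<beta>^2 - \<beta> + of_int b > 0" using q1 q2 bpos by linarith
  have key: "(of_int b - 1) * \<beta>^3 < (\<beta>^2 - \<beta> + of_int b) * D"
  proof -
    have "(\<beta>^2 - \<beta> + of_int b) * D > (\<beta>^2 - \<beta> + of_int b) * (of_int b * \<beta>)"
      using Qpos DbB by simp
    moreover have "(\<beta>^2 - \<beta> + of_int b) * (of_int b * \<beta>) - (of_int b - 1) * \<beta>^3
        = \<beta> * (\<beta>^2 - of_int b * \<beta> + (of_int b)^2)"
      by (simp add: algebra_simps power2_eq_square power3_eq_cube)
    moreover have "\<beta>^2 - of_int b * \<beta> + (of_int b)^2 \<ge> 0"
    proof -
      have "(of_int b::real)^2 \<ge> 0" by simp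
      thus ?thesis using K by linarith
    qed
    moreover have "\<beta> * (\<beta>^2 - of_int b * \<beta> + (of_int b)^2) \<ge> 0"
      using calculation(3) g1 by simp
    ultimately show ?thesis by linarith
  qed
  have part2: "(real_of_int b - 1) / (1 - (real_of_int a - \<beta>) ^ 2) < 2 * \<beta> - real_of_int a - 1"
  proof -
    have b0: "\<beta> \<noteq> 0" "D \<noteq> 0" using g1 Dpos by auto
    have "(real_of_int b - 1) / (D / \<beta>^2) = ((of_int b - 1) * \<beta>^3) / (D * \<beta>)"
      using b0 by (simp add: field_simps power2_eq_square power3_eq_cube)
    also have "\<dots> < ((\<beta>^2 - \<beta> + of_int b) * D) / (D * \<beta>)"
      using key Dpos g1 by (intro divide_strict_right_mono) auto
    also have "\<dots> = (\<beta>^2 - \<beta> + of_int b) / \<beta>" using b0 by simp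
    finally show ?thesis unfolding L R .
  qed
  show ?thesis using part1 part2 by blast
qed

end
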